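(* Let $\eta\in\mathbb{R}$, $h>0$, $x_0\in\mathbb{R}$, and let $(\Delta W_n)_{n\ge0}$ and $(\Delta\tilde W_n)_{n\ge0}$ be mutually independent sequences of i.i.d. $\mathcal{N}(0,h)$ random variables. For $f(x)=-x$, $g(x)=1+\eta x$ and $F(x)=f(x)-\tfrac12g'(x)g(x)$, define the three-stage Runge--Kutta iterates $$x_{n+1}=x_n+\tfrac14(F_1+3F_3)h+\tfrac14(G_1+3G_3)\Delta W_n+\tfrac{1}{2\sqrt3}\Big(f'(x_n)g(x_n)-g'(x_n)f(x_n)-\tfrac12g''(x_n)g(x_n)^2\Big)h\,\Delta\tilde W_n,$$ where $F_1=F(x_n)$, $G_1=g(x_n)$, $F_2=F(Y_2)$, $G_2=g(Y_2)$ with $Y_2=x_n+\tfrac13F_1h+\tfrac13G_1\Delta W_n$, and $F_3=F(Y_3)$, $G_3=g(Y_3)$ with $Y_3=x_n+\tfrac23F_2h+\tfrac23G_2\Delta W_n$, starting from the deterministic value $x_0$. Let $\mu^{(1)}_n=\mathbb{E}[x_n]$. Then $$\mu^{(1)}_{n+1}=-\tfrac1{24}h^2\eta(2+3\eta^2)-\tfrac1{48}h^3\eta(2+\eta^2)^2+\Big(1-h+\tfrac18h^2(4-\eta^4)-\tfrac1{48}h^3(2+\eta^2)^3\Big)\mu^{(1)}_n.$$ Consequently, if $\big|1-h+\tfrac18h^2(4-\eta^4)-\tfrac1{48}h^3(2+\eta^2)^3\big|<1$, then $$\mu^{(1)}_n\to-\frac{h\eta\big(4+6\eta^2+h(2+\eta^2)^2\big)}{48-6h(4-\eta^4)+h^2(2+\eta^2)^3}\quad(n\to\infty),$$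 which is $O(h)$ as $h\to0$.
   Context: Here $\Delta W_n,\Delta\tilde W_n$ are independent of $x_0,\dots,x_n$. *)

theory Defs
  imports "HOL-Probability.Probability" "HOL-Library.Landau_Symbols"
begin

definition rk3_step :: "(real \<Rightarrow> real) \<Rightarrow> (real \<Rightarrow> real) \<Rightarrow> real \<Rightarrow> real \<Rightarrow> real \<Rightarrow> real \<Rightarrow> real" where
  "rk3_step f g h x dW dWt =
    (let F = (\<lambda>y. f y - 1/2 * deriv g y * g y);
         F1 = F x; G1 = g x;
         Y2 = x + 1/3 * F1 * h + 1/3 * G1 * dW;
         F2 = F Y2; G2 = g Y2;
         Y3 = x + 2/3 * F2 * h + 2/3 * G2 * dW;
         F3 = F Y3; G3 = g Y3
     in x + 1/4 * (F1 + 3 * F3) * h + 1/4 * (G1 + 3 * G3) * dW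
          + 1 / (2 * sqrt 3) * (deriv f x * g x - deriv g x * f x
                                 - 1/2 * deriv (deriv g) x * (g x)^2) * h * dWt)"

primrec rk3_iter :: "(real \<Rightarrow> real) \<Rightarrow> (real \<Rightarrow> real) \<Rightarrow> real \<Rightarrow> real \<Rightarrow>
    (nat \<Rightarrow> 'a \<Rightarrow> real) \<Rightarrow> (nat \<Rightarrow> 'a \<Rightarrow> real) \<Rightarrow> nat \<Rightarrow> 'a \<Rightarrow> real" where
  "rk3_iter f g h x0 dW dWt 0 = (\<lambda>\<omega>. x0)"
| "rk3_iter f g h x0 dW dWt (Suc n) =
     (\<lambda>\<omega>. rk3_step f g h (rk3_iter f g h x0 dW dWt n \<omega>) (dW n \<omega>) (dWt n \<omega>))"

end

theory Submission imports Defs begin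

definition Bp :: "real \<Rightarrow> real \<Rightarrow> real \<Rightarrow> real" where
 "Bp eta h w = (1 - h - h*eta^2/2 + h^2/2 + h^2*eta^2/2 + h^2*eta^4/8 - h^3/6 - h^3*eta^2/4 - h^3*eta^4/8 - h^3*eta^6/48)
   + (eta - h*eta - h*eta^3/2 + h^2*eta/2 + h^2*eta^3/2 + h^2*eta^5/8) * w
   + (eta^2/2 - h*eta^2/2 - h*eta^4/4) * w^2 + (eta^3/6) * w^3"

definition Ap :: "real \<Rightarrow> real \<Rightarrow> real \<Rightarrow> real" where
 "Ap eta h w = (- h*eta/2 + h^2*eta/4 + h^2*eta^3/8 - h^3*eta/12 - h^3*eta^3/12 - h^3*eta^5/48)
   + (1 - h/2 - h*eta^2/2 + h^2/6 + h^2*eta^2/3 + h^2*eta^4/8) * w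
   + (eta/2 - h*eta/3 - h*eta^3/4) * w^2 + (eta^2/6) * w^3"

lemma deriv_neg: "deriv (\<lambda>y::real. - y) x = -1"
  by (rule DERIV_imp_deriv) (auto intro!: derivative_eq_intros)

lemma deriv_aff: "deriv (\<lambda>y::real. 1 + eta * y) = (\<lambda>_. eta)"
  by (rule ext, rule DERIV_imp_deriv) (auto intro!: derivative_eq_intros)

lemma step_eq:
  "rk3_step (\<lambda>y. - y) (\<lambda>y. 1 + eta * y) h x w t = x * Bp eta h w + Ap eta h w - h / (2 * sqrt 3) * t"
  unfolding rk3_step_def Let_def deriv_neg deriv_aff Bp_def Ap_def
  by (simp add: field_simps power2_eq_square power3_eq_cube power_numeral_reduce)

lemma normal_pow_integrable:
  assumes "h > 0" "distributed M lborel Z (normal_density 0 (sqrt h))"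
  shows "integrable M (\<lambda>\<omega>. Z \<omega> ^ k)"
proof -
  have "integrable lborel (\<lambda>x. normal_density 0 (sqrt h) x * x ^ k)"
    using integrable_normal_moment[where \<mu>=0 and \<sigma>="sqrt h" and k=k] assms(1) by simp
  then show ?thesis using distributed_integrable[OF assms(2), of "\<lambda>x. x^k"] by simp
qed

lemma normal_pow_integral:
  assumes "h > 0" "distributed M lborel Z (normal_density 0 (sqrt h))"
  shows "integral\<^sup>L M (\<lambda>\<omega>. Z \<omega> ^ 1) = 0"
    and "integral\<^sup>L M (\<lambda>\<omega>. Z \<omega> ^ 2) = h"
    and "integral\<^sup>L M (\<lambda>\<omega>. Z \<omega> ^ 3) = 0"
proof -
  have s: "0 < sqrt h" using assms by simp
  have d: "integral\<^sup>L M (\<lambda>\<omega>. Z \<omega> ^ k) = integral\<^sup>L lborel (\<lambda>x. normal_density 0 (sqrt h) x * (x - 0) ^ k)" for k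
    using distributed_integral[OF assms(2), of "\<lambda>x. x^k"] by simp
  show "integral\<^sup>L M (\<lambda>\<omega>. Z \<omega> ^ 1) = 0"
    using d[of 1] integral_normal_moment_odd[OF s, of 0 0] by simp
  show "integral\<^sup>L M (\<lambda>\<omega>. Z \<omega> ^ 3) = 0"
    using d[of 3] integral_normal_moment_odd[OF s, where k=1 and \<mu>=0] by (simp add: numeral_eq_Suc)
  show "integral\<^sup>L M (\<lambda>\<omega>. Z \<omega> ^ 2) = h"
    using d[of 2] integral_normal_moment_even[OF s, where k=1 and \<mu>=0] assms(1) by (simp add: numeral_eq_Suc)
qed

lemma cubic_int:
  assumes "prob_space M" "h > 0" "distributed M lborel Z (normal_density 0 (sqrt h))"
  shows "integrable M (\<lambda>\<omega>. ca + cb * Z \<omega> + cc * Z \<omega>^2 + cd * Z \<omega>^3)"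
    and "integral\<^sup>L M (\<lambda>\<omega>. ca + cb * Z \<omega> + cc * Z \<omega>^2 + cd * Z \<omega>^3) = ca + cc * h"
proof -
  interpret prob_space M by fact
  have i: "integrable M (\<lambda>\<omega>. Z \<omega> ^ k)" for k using normal_pow_integrable[OF assms(2,3)] .
  have i1: "integrable M Z" using i[of 1] by simp
  note e = normal_pow_integral[OF assms(2,3)]
  have e1: "integral\<^sup>L M Z = 0" using e(1) by simp
  show "integrable M (\<lambda>\<omega>. ca + cb * Z \<omega> + cc * Z \<omega>^2 + cd * Z \<omega>^3)"
    using i i1 by (intro Bochner_Integration.integrable_add integrable_mult_right) auto
  show "integral\<^sup>L M (\<lambda>\<omega>. ca + cb * Z \<omega> + cc * Z \<omega>^2 + cd * Z \<omega>^3) = ca + cc * h"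
    using i i1 e e1 by (simp add: Bochner_Integration.integral_add Bochner_Integration.integrable_add prob_space)
qed


lemma Bp_measurable[measurable]: "Bp eta h \<in> borel_measurable borel"
  unfolding Bp_def[abs_def] by measurable

lemma Ap_measurable[measurable]: "Ap eta h \<in> borel_measurable borel"
  unfolding Ap_def[abs_def] by measurable

lemma Bp_eq: "Bp eta h w = (1 - h - h*eta^2/2 + h^2/2 + h^2*eta^2/2 + h^2*eta^4/8 - h^3/6 - h^3*eta^2/4 - h^3*eta^4/8 - h^3*eta^6/48)
   + (eta - h*eta - h*eta^3/2 + h^2*eta/2 + h^2*eta^3/2 + h^2*eta^5/8) * w
   + (eta^2/2 - h*eta^2/2 - h*eta^4/4) * w^2 + (eta^3/6) * w^3"
  by (simp add: Bp_def)

lemma Ap_eq: "Ap eta h w = (- h*eta/2 + h^2*eta/4 + h^2*eta^3/8 - h^3*eta/12 - h^3*eta^3/12 - h^3*eta^5/48)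
   + (1 - h/2 - h*eta^2/2 + h^2/6 + h^2*eta^2/3 + h^2*eta^4/8) * w
   + (eta/2 - h*eta/3 - h*eta^3/4) * w^2 + (eta^2/6) * w^3"
  by (simp add: Ap_def)

lemma main_prob:
  fixes M :: "'a measure" and eta h x0 :: real and dW dWt :: "nat \<Rightarrow> 'a \<Rightarrow> real"
  assumes "prob_space M"
    and "h > 0"
    and dWd: "\<And>n. distributed M lborel (dW n) (normal_density 0 (sqrt h))"
    and dWtd: "\<And>n. distributed M lborel (dWt n) (normal_density 0 (sqrt h))"
    and ind: "prob_space.indep_vars M (\<lambda>_. borel)
           (\<lambda>i. case i of Inl n \<Rightarrow> dW n | Inr n \<Rightarrow> dWt n) (UNIV :: (nat + nat) set)"
  shows "integrable M (rk3_iter (\<lambda>y. - y) (\<lambda>y. 1 + eta * y) h x0 dW dWt n) \<and>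
    integral\<^sup>L M (rk3_iter (\<lambda>y. - y) (\<lambda>y. 1 + eta * y) h x0 dW dWt (Suc n)) =
      integral\<^sup>L M (rk3_iter (\<lambda>y. - y) (\<lambda>y. 1 + eta * y) h x0 dW dWt n) *
        (1 - h - h*eta^2/2 + h^2/2 + h^2*eta^2/2 + h^2*eta^4/8 - h^3/6 - h^3*eta^2/4 - h^3*eta^4/8 - h^3*eta^6/48
          + (eta^2/2 - h*eta^2/2 - h*eta^4/4) * h)
      + ((- h*eta/2 + h^2*eta/4 + h^2*eta^3/8 - h^3*eta/12 - h^3*eta^3/12 - h^3*eta^5/48)
          + (eta/2 - h*eta/3 - h*eta^3/4) * h)"
proof -
  interpret prob_space M by fact
  define xs where "xs = rk3_iter (\<lambda>y. - y) (\<lambda>y. 1 + eta * y) h x0 dW dWt"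
  define X where "X = (\<lambda>i. case i of Inl n \<Rightarrow> dW n | Inr n \<Rightarrow> dWt n)"
  define K where "K = (\<lambda>m::nat. Inl ` {..<m} \<union> Inr ` {..<m})"
  define Phi where "Phi = rk3_iter (\<lambda>y. - y) (\<lambda>y. 1 + eta * y) h x0
      (\<lambda>i z. z (Inl i)) (\<lambda>i z. (z::nat+nat \<Rightarrow> real) (Inr i))"
  have xs_Suc: "xs (Suc n) = (\<lambda>\<omega>. xs n \<omega> * Bp eta h (dW n \<omega>) + Ap eta h (dW n \<omega>) - h / (2 * sqrt 3) * dWt n \<omega>)" for n
    by (simp add: xs_def step_eq)
  have Phi_Suc: "Phi (Suc n) = (\<lambda>z. Phi n z * Bp eta h (z (Inl n)) + Ap eta h (z (Inl n)) - h / (2 * sqrt 3) * z (Inr n))" for n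
    by (simp add: Phi_def step_eq)
  have F1: "n \<le> m \<longrightarrow> Phi n (restrict (\<lambda>i. X i \<omega>) (K m)) = xs n \<omega>" for n m \<omega>
  proof (induction n)
    case 0
    then show ?case by (simp add: Phi_def xs_def)
  next
    case (Suc n)
    show ?case
    proof
      assume "Suc n \<le> m"
      then have "Inl n \<in> K m" "Inr n \<in> K m" by (auto simp: K_def)
      then have e1: "restrict (\<lambda>i. X i \<omega>) (K m) (Inl n) = dW n \<omega>"
        and e2: "restrict (\<lambda>i. X i \<omega>) (K m) (Inr n) = dWt n \<omega>" by (simp_all add: X_def)
      have IH: "Phi n (restrict (\<lambda>i. X i \<omega>) (K m)) = xs n \<omega>" using Suc.IH \<open>Suc n \<le> m\<close> by (simp add: restrict_def)
      show "Phi (Suc n) (restrict (\<lambda>i. X i \<omega>) (K m)) = xs (Suc n) \<omega>"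
        by (simp only: Phi_Suc xs_Suc IH e1 e2)
    qed
  qed
  have F2: "n \<le> m \<longrightarrow> Phi n \<in> borel_measurable (PiM (K m) (\<lambda>_. borel))" for n m
  proof (induction n)
    case 0
    then show ?case by (simp add: Phi_def)
  next
    case (Suc n)
    show ?case
    proof
      assume a: "Suc n \<le> m"
      then have "Inl n \<in> K m" "Inr n \<in> K m" by (auto simp: K_def)
      then have [measurable]: "(\<lambda>z. z (Inl n)) \<in> borel_measurable (PiM (K m) (\<lambda>_. borel))"
          "(\<lambda>z. z (Inr n)) \<in> borel_measurable (PiM (K m) (\<lambda>_. borel))"
        by (auto intro!: measurable_component_singleton)
      have [measurable]: "Phi n \<in> borel_measurable (PiM (K m) (\<lambda>_. borel))" using Suc a by simp
      show "Phi (Suc n) \<in> borel_measurable (PiM (K m) (\<lambda>_. borel))"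
        unfolding Phi_Suc by measurable
    qed
  qed
  have F3: "indep_var borel (xs n) borel (\<lambda>\<omega>. q (dW n \<omega>))" if q: "q \<in> borel_measurable borel" for n q
  proof -
    have iv: "indep_vars (\<lambda>_. borel) X UNIV" using ind by (simp add: X_def)
    have "indep_var (PiM (K n) (\<lambda>_. borel)) (\<lambda>\<omega>. restrict (\<lambda>i. X i \<omega>) (K n))
       (PiM {Inl n} (\<lambda>_. borel)) (\<lambda>\<omega>. restrict (\<lambda>i. X i \<omega>) {Inl n})"
      by (rule indep_var_restrict[OF iv]) (auto simp: K_def)
    then have "indep_var borel (Phi n \<circ> (\<lambda>\<omega>. restrict (\<lambda>i. X i \<omega>) (K n)))
         borel ((\<lambda>z. q (z (Inl n))) \<circ> (\<lambda>\<omega>. restrict (\<lambda>i. X i \<omega>) {Inl n}))"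
    proof (rule indep_var_compose)
      show "Phi n \<in> borel_measurable (PiM (K n) (\<lambda>_. borel))" using F2 by simp
      have [measurable]: "(\<lambda>z. z (Inl n)) \<in> borel_measurable (PiM {Inl n} (\<lambda>_. borel))"
        by (auto intro!: measurable_component_singleton)
      show "(\<lambda>z. q (z (Inl n))) \<in> borel_measurable (PiM {Inl n} (\<lambda>_. borel))"
        using q by measurable
    qed
    moreover have "Phi n \<circ> (\<lambda>\<omega>. restrict (\<lambda>i. X i \<omega>) (K n)) = xs n"
      using F1 by (auto simp: fun_eq_iff)
    moreover have "(\<lambda>z. q (z (Inl n))) \<circ> (\<lambda>\<omega>. restrict (\<lambda>i. X i \<omega>) {Inl n}) = (\<lambda>\<omega>. q (dW n \<omega>))"
      by (auto simp: fun_eq_iff X_def)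
    ultimately show ?thesis by simp
  qed
  note cB = cubic_int[OF assms(1,2) dWd, where ca="1 - h - h*eta^2/2 + h^2/2 + h^2*eta^2/2 + h^2*eta^4/8 - h^3/6 - h^3*eta^2/4 - h^3*eta^4/8 - h^3*eta^6/48" and cb="eta - h*eta - h*eta^3/2 + h^2*eta/2 + h^2*eta^3/2 + h^2*eta^5/8" and cc="eta^2/2 - h*eta^2/2 - h*eta^4/4" and cd="eta^3/6"]
  note cA = cubic_int[OF assms(1,2) dWd, where ca="- h*eta/2 + h^2*eta/4 + h^2*eta^3/8 - h^3*eta/12 - h^3*eta^3/12 - h^3*eta^5/48" and cb="1 - h/2 - h*eta^2/2 + h^2/6 + h^2*eta^2/3 + h^2*eta^4/8" and cc="eta/2 - h*eta/3 - h*eta^3/4" and cd="eta^2/6"]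
  have iB: "integrable M (\<lambda>\<omega>. Bp eta h (dW n \<omega>))" for n using cB(1) by (simp add: Bp_eq)
  have eB: "integral\<^sup>L M (\<lambda>\<omega>. Bp eta h (dW n \<omega>)) = 1 - h - h*eta^2/2 + h^2/2 + h^2*eta^2/2 + h^2*eta^4/8 - h^3/6 - h^3*eta^2/4 - h^3*eta^4/8 - h^3*eta^6/48
          + (eta^2/2 - h*eta^2/2 - h*eta^4/4) * h" for n using cB(2) by (simp add: Bp_eq)
  have iA: "integrable M (\<lambda>\<omega>. Ap eta h (dW n \<omega>))" for n using cA(1) by (simp add: Ap_eq)
  have eA: "integral\<^sup>L M (\<lambda>\<omega>. Ap eta h (dW n \<omega>)) = (- h*eta/2 + h^2*eta/4 + h^2*eta^3/8 - h^3*eta/12 - h^3*eta^3/12 - h^3*eta^5/48)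
          + (eta/2 - h*eta/3 - h*eta^3/4) * h" for n using cA(2) by (simp add: Ap_eq)
  have iW: "integrable M (dWt n)" for n
    using normal_pow_integrable[OF assms(2) dWtd, of n 1] by simp
  have eW: "integral\<^sup>L M (dWt n) = 0" for n
    using normal_pow_integral(1)[OF assms(2) dWtd, of n] by simp
  have I: "integrable M (xs n)" for n
  proof (induction n)
    case 0
    then show ?case by (simp add: xs_def)
  next
    case (Suc n)
    have "integrable M (\<lambda>\<omega>. xs n \<omega> * Bp eta h (dW n \<omega>))"
      by (rule indep_var_integrable[OF F3 Suc iB]) measurable
    then show ?case unfolding xs_Suc using iA iW by auto
  qed
  have "integral\<^sup>L M (xs (Suc n)) = integral\<^sup>L M (xs n) * integral\<^sup>L M (\<lambda>\<omega>. Bp eta h (dW n \<omega>))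
      + integral\<^sup>L M (\<lambda>\<omega>. Ap eta h (dW n \<omega>)) - h / (2 * sqrt 3) * integral\<^sup>L M (dWt n)"
  proof -
    have e: "integral\<^sup>L M (\<lambda>\<omega>. xs n \<omega> * Bp eta h (dW n \<omega>)) = integral\<^sup>L M (xs n) * integral\<^sup>L M (\<lambda>\<omega>. Bp eta h (dW n \<omega>))"
      by (rule indep_var_lebesgue_integral[OF F3 I iB]) measurable
    have i: "integrable M (\<lambda>\<omega>. xs n \<omega> * Bp eta h (dW n \<omega>))"
      by (rule indep_var_integrable[OF F3 I iB]) measurable
    show ?thesis unfolding xs_Suc using i iA iW e by simp
  qed
  then show ?thesis using I eA eB eW by (simp add: xs_def)
qed

theorem mainTheorem8:
  fixes M :: "'a measure" and eta h x0 :: real and dW dWt :: "nat \<Rightarrow> 'a \<Rightarrow> real"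
  assumes "prob_space M"
    and "h > 0"
    and "\<And>n. distributed M lborel (dW n) (normal_density 0 (sqrt h))"
    and "\<And>n. distributed M lborel (dWt n) (normal_density 0 (sqrt h))"
    and "prob_space.indep_vars M (\<lambda>_. borel)
           (\<lambda>i. case i of Inl n \<Rightarrow> dW n | Inr n \<Rightarrow> dWt n) (UNIV :: (nat + nat) set)"
  defines "mu \<equiv> (\<lambda>n. integral\<^sup>L M (rk3_iter (\<lambda>y. - y) (\<lambda>y. 1 + eta * y) h x0 dW dWt n))"
    and "c \<equiv> 1 - h + 1/8 * h^2 * (4 - eta^4) - 1/48 * h^3 * (2 + eta^2)^3"
    and "L \<equiv> (\<lambda>k::real. - (k * eta * (4 + 6 * eta^2 + k * (2 + eta^2)^2))
                 / (48 - 6 * k * (4 - eta^4) + k^2 * (2 + eta^2)^3))"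
  shows "(\<forall>n. mu (Suc n) = - 1/24 * h^2 * eta * (2 + 3 * eta^2)
                          - 1/48 * h^3 * eta * (2 + eta^2)^2 + c * mu n)
         \<and> (\<bar>c\<bar> < 1 \<longrightarrow> mu \<longlonglongrightarrow> L h)
         \<and> L \<in> O[at_right 0](\<lambda>k. k)"
proof -
  define a where "a = - 1/24 * h^2 * eta * (2 + 3 * eta^2) - 1/48 * h^3 * eta * (2 + eta^2)^2"
  have rec: "\<forall>n. mu (Suc n) = - 1/24 * h^2 * eta * (2 + 3 * eta^2)
                          - 1/48 * h^3 * eta * (2 + eta^2)^2 + c * mu n"
  proof
    fix n
    have cE: "1 - h - h*eta^2/2 + h^2/2 + h^2*eta^2/2 + h^2*eta^4/8 - h^3/6 - h^3*eta^2/4 - h^3*eta^4/8 - h^3*eta^6/48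
          + (eta^2/2 - h*eta^2/2 - h*eta^4/4) * h = c"
      unfolding c_def by (simp add: algebra_simps power_numeral_reduce)
    have aE: "(- h*eta/2 + h^2*eta/4 + h^2*eta^3/8 - h^3*eta/12 - h^3*eta^3/12 - h^3*eta^5/48)
          + (eta/2 - h*eta/3 - h*eta^3/4) * h = - 1/24 * h^2 * eta * (2 + 3 * eta^2)
                          - 1/48 * h^3 * eta * (2 + eta^2)^2"
      by (simp add: algebra_simps power_numeral_reduce)
    have "mu (Suc n) = mu n *
        (1 - h - h*eta^2/2 + h^2/2 + h^2*eta^2/2 + h^2*eta^4/8 - h^3/6 - h^3*eta^2/4 - h^3*eta^4/8 - h^3*eta^6/48
          + (eta^2/2 - h*eta^2/2 - h*eta^4/4) * h)
      + ((- h*eta/2 + h^2*eta/4 + h^2*eta^3/8 - h^3*eta/12 - h^3*eta^3/12 - h^3*eta^5/48)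
          + (eta/2 - h*eta/3 - h*eta^3/4) * h)"
      unfolding mu_def using main_prob[OF assms(1-5)] by blast
    then show "mu (Suc n) = - 1/24 * h^2 * eta * (2 + 3 * eta^2)
                          - 1/48 * h^3 * eta * (2 + eta^2)^2 + c * mu n"
      unfolding cE aE by (simp add: mult.commute)
  qed
  have lim: "mu \<longlonglongrightarrow> L h" if cl: "\<bar>c\<bar> < 1"
  proof -
    define D where "D = 48 - 6 * h * (4 - eta^4) + h^2 * (2 + eta^2)^3"
    have oc: "1 - c = h * D / 48" unfolding c_def D_def by (simp add: algebra_simps power_numeral_reduce)
    have "1 - c > 0" using cl by simp
    then have Dnz: "D \<noteq> 0" using oc \<open>h > 0\<close> by auto
    have Lh: "L h = - (h * eta * (4 + 6 * eta^2 + h * (2 + eta^2)^2)) / D" unfolding L_def D_def by simp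
    have fp: "a + c * L h = L h"
    proof -
      have "L h * (1 - c) = a" unfolding Lh oc a_def using Dnz
        by (simp add: field_simps power_numeral_reduce)
      then show ?thesis by (simp add: algebra_simps)
    qed
    have cf: "mu n = L h + (mu 0 - L h) * c^n" for n
    proof (induction n)
      case 0 then show ?case by simp
    next
      case (Suc n)
      have "mu (Suc n) = a + c * mu n" using rec a_def by simp
      also have "\<dots> = (a + c * L h) + (mu 0 - L h) * c^(Suc n)" using Suc by (simp add: algebra_simps) (metis distrib_left)
      finally show ?case using fp by simp
    qed
    have c0: "(\<lambda>n. c^n) \<longlonglongrightarrow> 0" using cl by (simp add: LIMSEQ_abs_realpow_zero2)
    then have "(\<lambda>n. (mu 0 - L h) * c^n) \<longlonglongrightarrow> (mu 0 - L h) * 0"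
      by (rule tendsto_mult[OF tendsto_const])
    then have "(\<lambda>n. L h + (mu 0 - L h) * c^n) \<longlonglongrightarrow> L h + (mu 0 - L h) * 0"
      by (rule tendsto_add[OF tendsto_const])
    then have X: "(\<lambda>n. L h + (mu 0 - L h) * c^n) \<longlonglongrightarrow> L h" by simp
    have mueq: "mu = (\<lambda>n. L h + (mu 0 - L h) * c^n)" by (rule ext) (rule cf)
    show ?thesis by (subst mueq) (rule X)
  qed
  have big: "L \<in> O[at_right 0](\<lambda>k. k)"
  proof -
    define q where "q = (\<lambda>k::real. - (eta * (4 + 6 * eta^2 + k * (2 + eta^2)^2))
                 / (48 - 6 * k * (4 - eta^4) + k^2 * (2 + eta^2)^3))"
    have Lq: "L k = k * q k" for k unfolding L_def q_def by simp
    have "(q \<longlongrightarrow> q 0) (at_right 0)" unfolding q_def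
      by (intro tendsto_intros) auto
    then have "eventually (\<lambda>k. dist (q k) (q 0) < 1) (at_right 0)"
      by (rule tendstoD) simp
    then have "eventually (\<lambda>k. norm (L k) \<le> (\<bar>q 0\<bar> + 1) * norm k) (at_right 0)"
    proof (rule eventually_mono)
      fix k assume "dist (q k) (q 0) < 1"
      then have "\<bar>q k\<bar> \<le> \<bar>q 0\<bar> + 1" by (simp add: dist_real_def)
      then show "norm (L k) \<le> (\<bar>q 0\<bar> + 1) * norm k"
        unfolding Lq by (simp add: abs_mult mult.commute mult_left_mono)
    qed
    then show ?thesis by (rule bigoI)
  qed
  show ?thesis using rec lim big by blast
qed

end
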